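(* Let $c>0$. There is a constant $\delta=\delta(c)>0$ such that the following holds. Let $p\ge 2$ and let $\mathcal{F}$ be a finite family of $n\ge 1$ nonempty subsets of $\mathbb{R}^d$ whose dual hypergraph has a hereditarily $c$-linear Delaunay graph and which satisfies the $(p,2)$-property. Then there is a point $x\in\mathbb{R}^d$ contained in at least $\delta\, n/p$ members of $\mathcal{F}$.
   Context: A hypergraph $H=(V,\mathcal{E})$ consists of a finite vertex set $V$ and a collection $\mathcal{E}$ of subsets of $V$. For $S\subseteq V$, $H|_S=(S,\{e\cap S: e\in\mathcal{E}\})$. The Delaunay graph of $H$ is the graph on $V$ whose edges are the hyperedges of size exactly $2$. $H$ has a hereditarily $c$-linear Delaunay graph if for every nonempty $S\subseteq V$ the Delaunay graph of $H|_S$ has fewer than $c|S|$ edges. The dual hypergraph of a family $\mathcal{F}$ of subsets of $\mathbb{R}^d$ has vertex set $\mathcal{F}$ and, for each $x\in\mathbb{R}^d$, the hyperedge $e_x=\{B\in\mathcal{F}: x\in B\}$. $\mathcal{F}$ satisfies the $(p,2)$-property if among any $p$ members of $\mathcal{F}$ some two have nonempty intersection. *)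

theory Defs
  imports Main Complex_Main
begin

text \<open>Euclidean space R^d, represented (so that d can be quantified inside a formula)
  as the real sequences vanishing from index d on; coordinates are indices 0..d-1.\<close>
definition Rn :: "nat \<Rightarrow> (nat \<Rightarrow> real) set" where
  "Rn d = {x. \<forall>i\<ge>d. x i = 0}"

definition restrict_hg :: "'v set set \<Rightarrow> 'v set \<Rightarrow> 'v set set" where
  "restrict_hg E S = {e \<inter> S | e. e \<in> E}"

definition delaunay_edges :: "'v set set \<Rightarrow> 'v set set" where
  "delaunay_edges E = {e \<in> E. card e = 2}"

definition hered_c_linear_delaunay :: "real \<Rightarrow> 'v set \<Rightarrow> 'v set set \<Rightarrow> bool" where
  "hered_c_linear_delaunay c V E \<longleftrightarrow>
     (\<forall>S. S \<subseteq> V \<and> S \<noteq> {} \<longrightarrow>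
        real (card (delaunay_edges (restrict_hg E S))) < c * real (card S))"

definition dual_edges :: "nat \<Rightarrow> (nat \<Rightarrow> real) set set \<Rightarrow> (nat \<Rightarrow> real) set set set" where
  "dual_edges d F = {{B \<in> F. x \<in> B} | x. x \<in> Rn d}"

definition p2_property :: "nat \<Rightarrow> 'a set set \<Rightarrow> bool" where
  "p2_property p F \<longleftrightarrow>
     (\<forall>G. G \<subseteq> F \<and> card G = p \<longrightarrow> (\<exists>A\<in>G. \<exists>B\<in>G. A \<noteq> B \<and> A \<inter> B \<noteq> {}))"

end

theory Submission
  imports Defs
begin


lemma weight_sum_aux:
  fixes q r :: real
  assumes "finite X" "finite E" "X \<inter> E = {}" "T \<subseteq> E"
  shows "(\<Sum>U\<in>{U. U \<subseteq> E \<union> X \<and> U \<inter> E = T}. q ^ card U * r ^ card (E \<union> X - U))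
         = q ^ card T * r ^ card (E - T) * (q + r) ^ card X"
  using assms(1,3)
proof (induction X rule: finite_induct)
  case empty
  have "{U. U \<subseteq> E \<union> {} \<and> U \<inter> E = T} = {T}" using assms(4) by auto
  then show ?case by simp
next
  case (insert a X)
  define A0 where "A0 = {U. U \<subseteq> E \<union> X \<and> U \<inter> E = T}"
  have aE: "a \<notin> E" "a \<notin> X" using insert by auto
  have fin: "finite (E \<union> X)" using insert assms(2) by auto
  have A0fin: "finite A0" unfolding A0_def by (rule finite_subset[of _ "Pow (E \<union> X)"]) (use fin in auto)
  have split: "{U. U \<subseteq> E \<union> insert a X \<and> U \<inter> E = T} = A0 \<union> insert a ` A0"
  proof (rule set_eqI, rule iffI)
    fix U assume U: "U \<in> {U. U \<subseteq> E \<union> insert a X \<and> U \<inter> E = T}"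
    show "U \<in> A0 \<union> insert a ` A0"
    proof (cases "a \<in> U")
      case True
      then have "U - {a} \<in> A0" using U aE unfolding A0_def by auto
      then show ?thesis using True by (metis UnI2 image_eqI insert_Diff)
    next
      case False
      then show ?thesis using U unfolding A0_def by auto
    qed
  next
    fix U assume "U \<in> A0 \<union> insert a ` A0"
    then show "U \<in> {U. U \<subseteq> E \<union> insert a X \<and> U \<inter> E = T}"
      unfolding A0_def using aE by auto
  qed
  have disj: "A0 \<inter> insert a ` A0 = {}" unfolding A0_def using aE by auto
  have inj: "inj_on (insert a) A0"
  proof (rule inj_onI)
    fix x y assume xy: "x \<in> A0" "y \<in> A0" "insert a x = insert a y"
    then have "a \<notin> x" "a \<notin> y" using aE unfolding A0_def by auto
    then show "x = y" using xy(3) by (metis Diff_insert_absorb)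
  qed
  have s0: "(\<Sum>U\<in>A0. q ^ card U * r ^ card (E \<union> insert a X - U))
      = r * (\<Sum>U\<in>A0. q ^ card U * r ^ card (E \<union> X - U))"
    unfolding sum_distrib_left
  proof (rule sum.cong[OF refl])
    fix U assume U: "U \<in> A0"
    have "E \<union> insert a X - U = insert a (E \<union> X - U)" using U aE unfolding A0_def by auto
    moreover have "a \<notin> E \<union> X - U" using aE by auto
    ultimately have "card (E \<union> insert a X - U) = Suc (card (E \<union> X - U))" using fin by simp
    then show "q ^ card U * r ^ card (E \<union> insert a X - U) = r * (q ^ card U * r ^ card (E \<union> X - U))"
      by simp
  qed
  have s1: "(\<Sum>U\<in>insert a ` A0. q ^ card U * r ^ card (E \<union> insert a X - U))
      = q * (\<Sum>U\<in>A0. q ^ card U * r ^ card (E \<union> X - U))"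
    unfolding sum.reindex[OF inj] sum_distrib_left
  proof (rule sum.cong[OF refl], simp only: comp_def)
    fix U assume U: "U \<in> A0"
    have Ufin: "finite U" using U fin unfolding A0_def by (auto intro: finite_subset)
    have "a \<notin> U" using U aE unfolding A0_def by auto
    then have "card (insert a U) = Suc (card U)" using Ufin by simp
    moreover have "E \<union> insert a X - insert a U = E \<union> X - U" using aE by auto
    ultimately show "q ^ card (insert a U) * r ^ card (E \<union> insert a X - insert a U) = q * (q ^ card U * r ^ card (E \<union> X - U))"
      by simp
  qed
  have "(\<Sum>U\<in>{U. U \<subseteq> E \<union> insert a X \<and> U \<inter> E = T}. q ^ card U * r ^ card (E \<union> insert a X - U))
     = (q + r) * (\<Sum>U\<in>A0. q ^ card U * r ^ card (E \<union> X - U))"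
    unfolding split sum.union_disjoint[OF A0fin finite_imageI[OF A0fin] disj] s0 s1
    by (simp add: algebra_simps)
  also have "\<dots> = q ^ card T * r ^ card (E - T) * (q + r) ^ card (insert a X)"
    using insert A0_def by simp
  finally show ?case .
qed

lemma weight_sum:
  fixes q r :: real
  assumes "finite S" "E \<subseteq> S" "T \<subseteq> E"
  shows "(\<Sum>U\<in>{U. U \<subseteq> S \<and> U \<inter> E = T}. q ^ card U * r ^ card (S - U))
         = q ^ card T * r ^ card (E - T) * (q + r) ^ card (S - E)"
proof -
  have eq: "E \<union> (S - E) = S" using assms by auto
  have "(\<Sum>U\<in>{U. U \<subseteq> E \<union> (S - E) \<and> U \<inter> E = T}. q ^ card U * r ^ card (E \<union> (S - E) - U))
     = q ^ card T * r ^ card (E - T) * (q + r) ^ card (S - E)"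
    by (rule weight_sum_aux) (use assms in \<open>auto intro: finite_subset\<close>)
  then show ?thesis unfolding eq .
qed


lemma greedy:
  fixes R :: "'a \<Rightarrow> 'a \<Rightarrow> bool" and D :: real
  assumes "finite V" "\<And>a b. R a b \<Longrightarrow> R b a"
    and "\<And>S. S \<subseteq> V \<Longrightarrow> S \<noteq> {} \<Longrightarrow> \<exists>a\<in>S. real (card {b\<in>S. b \<noteq> a \<and> R a b}) \<le> D"
  shows "\<exists>I\<subseteq>V. (\<forall>a\<in>I. \<forall>b\<in>I. a \<noteq> b \<longrightarrow> \<not> R a b) \<and> real (card V) \<le> (D + 1) * real (card I)"
  using assms(1,3)
proof (induction "card V" arbitrary: V rule: less_induct)
  case less
  show ?case
  proof (cases "V = {}")
    case True
    then show ?thesis by auto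
  next
    case False
    obtain a where a: "a \<in> V" "real (card {b\<in>V. b \<noteq> a \<and> R a b}) \<le> D"
      using less.prems(2)[of V] False by auto
    define N where "N = {b\<in>V. b \<noteq> a \<and> R a b}"
    define V' where "V' = V - insert a N"
    have V'sub: "V' \<subseteq> V" unfolding V'_def by auto
    have "V' \<subset> V" using V'sub a(1) unfolding V'_def by auto
    then have lt: "card V' < card V" by (rule psubset_card_mono[OF less.prems(1)])
    have "\<exists>I\<subseteq>V'. (\<forall>x\<in>I. \<forall>y\<in>I. x \<noteq> y \<longrightarrow> \<not> R x y) \<and> real (card V') \<le> (D + 1) * real (card I)"
    proof (rule less.hyps[OF lt])
      show "finite V'" using V'sub less.prems(1) by (rule finite_subset)
    next
      fix S assume S: "S \<subseteq> V'" "S \<noteq> {}"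
      have "S \<subseteq> V" using S(1) V'sub by (rule order_trans)
      then show "\<exists>a\<in>S. real (card {b\<in>S. b \<noteq> a \<and> R a b}) \<le> D"
        by (rule less.prems(2)[OF _ S(2)])
    qed
    then obtain I' where I': "I' \<subseteq> V'" "\<forall>x\<in>I'. \<forall>y\<in>I'. x \<noteq> y \<longrightarrow> \<not> R x y"
      "real (card V') \<le> (D + 1) * real (card I')" by blast
    define I where "I = insert a I'"
    have aV': "a \<notin> V'" unfolding V'_def by simp
    have aI': "a \<notin> I'" using I'(1) aV' by (rule contra_subsetD)
    have finI': "finite I'" by (rule finite_subset[OF I'(1)]) (rule finite_subset[OF V'sub less.prems(1)])
    have "V \<subseteq> V' \<union> insert a N" unfolding V'_def by blast
    then have "card V \<le> card (V' \<union> insert a N)"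
      using less.prems(1) finite_subset[OF V'sub less.prems(1)] by (intro card_mono) (auto simp: N_def)
    also have "\<dots> \<le> card V' + card (insert a N)" by (rule card_Un_le)
    also have "\<dots> \<le> card V' + (card N + 1)"
      using card_insert_le_m1 by (simp add: card_insert_if N_def less.prems(1))
    finally have cV: "real (card V) \<le> real (card V') + real (card N) + 1" by linarith
    have "I \<subseteq> V" unfolding I_def using I' V'sub a by auto
    moreover have "\<forall>x\<in>I. \<forall>y\<in>I. x \<noteq> y \<longrightarrow> \<not> R x y"
    proof (intro ballI impI)
      fix x y assume xy: "x \<in> I" "y \<in> I" "x \<noteq> y"
      have noN: "\<And>z. z \<in> I' \<Longrightarrow> \<not> R a z" using I'(1) aI' unfolding V'_def N_def by auto
      show "\<not> R x y"
      proof (cases "x = a")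
        case True
        then show ?thesis using xy noN unfolding I_def by auto
      next
        case False
        then show ?thesis using xy noN I'(2) assms(2) unfolding I_def by blast
      qed
    qed
    moreover have "real (card V) \<le> (D + 1) * real (card I)"
    proof -
      have "card I = card I' + 1" unfolding I_def using aI' finI' by simp
      then show ?thesis using cV I'(3) a(2) unfolding N_def by (simp add: algebra_simps)
    qed
    ultimately show ?thesis by blast
  qed
qed



definition wit :: "nat \<Rightarrow> (nat \<Rightarrow> real) set set \<Rightarrow> (nat \<Rightarrow> real)" where
  "wit d P = (SOME x. x \<in> Rn d \<and> (\<forall>C\<in>P. x \<in> C))"

lemma wit_prop:
  assumes "A \<subseteq> Rn d" "A \<inter> B \<noteq> {}"
  shows "wit d {A, B} \<in> Rn d \<and> wit d {A, B} \<in> A \<and> wit d {A, B} \<in> B"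
proof -
  obtain x where "x \<in> A" "x \<in> B" using assms(2) by blast
  then have "\<exists>x. x \<in> Rn d \<and> (\<forall>C\<in>{A, B}. x \<in> C)" using assms(1) by blast
  then have "wit d {A, B} \<in> Rn d \<and> (\<forall>C\<in>{A, B}. wit d {A, B} \<in> C)"
    unfolding wit_def by (rule someI_ex)
  then show ?thesis by simp
qed

lemma del_c:
  assumes "hered_c_linear_delaunay c F E" "U \<subseteq> F" "c > 0"
  shows "real (card (delaunay_edges (restrict_hg E U))) \<le> c * real (card U)"
proof (cases "U = {}")
  case True
  have "delaunay_edges (restrict_hg E U) = {}"
    unfolding delaunay_edges_def restrict_hg_def True by auto
  then show ?thesis using assms(3) by simp
next
  case False
  then show ?thesis using assms(1,2) unfolding hered_c_linear_delaunay_def by (simp add: less_imp_le)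
qed

lemma del_bound:
  assumes "finite F" "U \<subseteq> S" "S \<subseteq> F" "\<forall>B\<in>F. B \<subseteq> Rn d"
  shows "card {\<pi> \<in> (SIGMA A:S. {B\<in>S. B \<noteq> A \<and> A \<inter> B \<noteq> {}}).
             U \<inter> {C\<in>S. wit d {fst \<pi>, snd \<pi>} \<in> C} = {fst \<pi>, snd \<pi>}}
         \<le> 2 * card (delaunay_edges (restrict_hg (dual_edges d F) U))"
    (is "card ?L \<le> 2 * card ?D")
proof -
  have finU: "finite U" using assms by (meson finite_subset)
  have finD: "finite ?D"
  proof (rule finite_subset[of _ "Pow U"])
    show "?D \<subseteq> Pow U" unfolding delaunay_edges_def restrict_hg_def by auto
  qed (use finU in simp)
  define Q where "Q P = {(a, b). a \<noteq> b \<and> {a, b} = P}" for P :: "(nat \<Rightarrow> real) set set"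
  have sub: "?L \<subseteq> (\<Union>P\<in>?D. Q P)"
  proof
    fix \<pi> assume \<pi>: "\<pi> \<in> ?L"
    obtain A B where AB: "\<pi> = (A, B)" by (cases \<pi>)
    have A: "A \<in> S" "B \<in> S" "A \<noteq> B" "A \<inter> B \<noteq> {}" and eq: "U \<inter> {C\<in>S. wit d {A, B} \<in> C} = {A, B}"
      using \<pi> AB by auto
    have ARn: "A \<subseteq> Rn d" using A assms by auto
    note w = wit_prop[OF ARn A(4)]
    define ee where "ee = {B' \<in> F. wit d {A, B} \<in> B'}"
    have ee1: "ee \<in> dual_edges d F" unfolding dual_edges_def mem_Collect_eq ee_def
      by (rule exI[of _ "wit d {A, B}"]) (use w in simp)
    have "ee \<inter> U = U \<inter> {C\<in>S. wit d {A, B} \<in> C}" unfolding ee_def using assms(2,3) by blast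
    then have ee2: "{A, B} = ee \<inter> U" using eq by simp
    have "{A, B} \<in> restrict_hg (dual_edges d F) U" unfolding restrict_hg_def mem_Collect_eq
      by (rule exI[of _ ee]) (use ee1 ee2 in simp)
    moreover have "card {A, B} = 2" using A(3) by simp
    ultimately have inD: "{A, B} \<in> ?D" unfolding delaunay_edges_def by simp
    have inQ: "\<pi> \<in> Q {A, B}" unfolding Q_def AB using A(3) by simp
    show "\<pi> \<in> (\<Union>P\<in>?D. Q P)" using inD inQ by (rule UN_I)
  qed
  have Qcard: "card (Q P) \<le> 2" and Qfin: "finite (Q P)" if "P \<in> ?D" for P
  proof -
    have "card P = 2" using that unfolding delaunay_edges_def by simp
    then obtain u v where P: "P = {u, v}" "u \<noteq> v" by (meson card_2_iff)
    have sub2: "Q P \<subseteq> {(u, v), (v, u)}" unfolding Q_def P by (auto simp: doubleton_eq_iff)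
    have c2: "card {(u, v), (v, u)} \<le> 2" using P(2) by simp
    show fq: "finite (Q P)" by (rule finite_subset[OF sub2]) simp
    have "card (Q P) \<le> card {(u, v), (v, u)}" by (rule card_mono[OF _ sub2]) simp
    then show "card (Q P) \<le> 2" using c2 by linarith
  qed
  have "card ?L \<le> card (\<Union>P\<in>?D. Q P)"
    by (rule card_mono[OF _ sub]) (use finD Qfin in auto)
  also have "\<dots> \<le> (\<Sum>P\<in>?D. card (Q P))" by (rule card_UN_le[OF finD])
  also have "\<dots> \<le> (\<Sum>P\<in>?D. 2)" by (rule sum_mono) (use Qcard in auto)
  also have "\<dots> = 2 * card ?D" by simp
  finally show ?thesis .
qed



lemma pair_bound:
  fixes c :: real and k :: nat
  assumes c: "c > 0" and finF: "finite F" and sub: "\<forall>B\<in>F. B \<subseteq> Rn d"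
    and H: "hered_c_linear_delaunay c F (dual_edges d F)"
    and k: "k \<ge> 1" and dep: "\<forall>x\<in>Rn d. card {B\<in>F. x \<in> B} \<le> k"
    and SF: "S \<subseteq> F"
  shows "real (card (SIGMA A:S. {B\<in>S. B \<noteq> A \<and> A \<inter> B \<noteq> {}})) \<le> 8 * c * real k * real (card S)"
proof -
  define Prs where "Prs = (SIGMA A:S. {B\<in>S. B \<noteq> A \<and> A \<inter> B \<noteq> {}})"
  define q :: real where "q = 1 / (2 * real k)"
  define r :: real where "r = 1 - q"
  have kpos: "real k \<ge> 1" using k by simp
  have q0: "q > 0" unfolding q_def using kpos by simp
  have kq: "real k * q = 1 / 2" unfolding q_def using kpos by simp
  have q1: "q \<le> 1 / 2" unfolding q_def using kpos by (simp add: field_simps)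
  have r0: "r \<ge> 0" "r \<le> 1" unfolding r_def using q0 q1 by simp_all
  have qr: "q + r = 1" unfolding r_def by simp
  have rk: "r ^ k \<ge> 1 / 2"
  proof -
    have "1 + real k * (- q) \<le> (1 + (- q)) ^ k" by (rule Bernoulli_inequality) (use q1 in simp)
    then show ?thesis using kq unfolding r_def by simp
  qed
  define W where "W U = q ^ card U * r ^ card (S - U)" for U
  have W0: "W U \<ge> 0" for U unfolding W_def using q0 r0 by simp
  have finS: "finite S" using SF finF by (rule finite_subset)
  have finP: "finite (Pow S)" using finS by simp
  have finPrs: "finite Prs" unfolding Prs_def using finS by simp
  define e where "e \<pi> = {C\<in>S. wit d {fst \<pi>, snd \<pi>} \<in> C}" for \<pi>
  define P where "P \<pi> = {fst \<pi>, snd \<pi>}" for \<pi> :: "((nat \<Rightarrow> real) set \<times> (nat \<Rightarrow> real) set)"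
  have PowS: "\<And>X. Pow S = {U. U \<subseteq> S}" by auto
  have a: "(\<Sum>U\<in>Pow S. if U \<inter> e \<pi> = P \<pi> then W U else 0) \<ge> q ^ 2 / 2" if \<pi>: "\<pi> \<in> Prs" for \<pi>
  proof -
    obtain A B where AB: "\<pi> = (A, B)" by (cases \<pi>)
    have A: "A \<in> S" "B \<in> S" "A \<noteq> B" "A \<inter> B \<noteq> {}" using \<pi> AB unfolding Prs_def by auto
    have ARn: "A \<subseteq> Rn d" using A SF sub by auto
    note w = wit_prop[OF ARn A(4)]
    have eS: "e \<pi> \<subseteq> S" unfolding e_def by auto
    have Pe: "P \<pi> \<subseteq> e \<pi>" unfolding e_def P_def AB using w A by simp
    have cP: "card (P \<pi>) = 2" unfolding P_def AB using A(3) by simp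
    have "e \<pi> \<subseteq> {B'\<in>F. wit d {A, B} \<in> B'}" unfolding e_def AB using SF by auto
    then have "card (e \<pi>) \<le> card {B'\<in>F. wit d {A, B} \<in> B'}" by (rule card_mono[rotated]) (use finF in simp)
    also have "\<dots> \<le> k" using dep w by simp
    finally have ce: "card (e \<pi>) \<le> k" .
    have finE: "finite (e \<pi>)" using eS finS by (rule finite_subset)
    have "card (e \<pi> - P \<pi>) \<le> card (e \<pi>)" using card_mono[OF finE, of "e \<pi> - P \<pi>"] by blast
    then have ced: "card (e \<pi> - P \<pi>) \<le> k" using ce by linarith
    have "(\<Sum>U\<in>Pow S. if U \<inter> e \<pi> = P \<pi> then W U else 0) = (\<Sum>U\<in>{U\<in>Pow S. U \<inter> e \<pi> = P \<pi>}. W U)"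
      by (rule sum.inter_filter[symmetric]) (rule finP)
    also have "{U\<in>Pow S. U \<inter> e \<pi> = P \<pi>} = {U. U \<subseteq> S \<and> U \<inter> e \<pi> = P \<pi>}" by auto
    also have "(\<Sum>U\<in>{U. U \<subseteq> S \<and> U \<inter> e \<pi> = P \<pi>}. W U) = q ^ card (P \<pi>) * r ^ card (e \<pi> - P \<pi>) * (q + r) ^ card (S - e \<pi>)"
      unfolding W_def by (rule weight_sum[OF finS eS Pe])
    also have "\<dots> = q ^ 2 * r ^ card (e \<pi> - P \<pi>)" using cP qr by simp
    also have "\<dots> \<ge> q ^ 2 * r ^ k"
      by (rule mult_left_mono[OF power_decreasing[OF ced r0(1) r0(2)]]) simp
    finally have "(\<Sum>U\<in>Pow S. if U \<inter> e \<pi> = P \<pi> then W U else 0) \<ge> q ^ 2 * r ^ k" .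
    moreover have "q ^ 2 * r ^ k \<ge> q ^ 2 * (1 / 2)" by (rule mult_left_mono[OF rk]) simp
    ultimately show ?thesis by simp
  qed
  have inner: "(\<Sum>\<pi>\<in>Prs. if U \<inter> e \<pi> = P \<pi> then W U else 0) \<le> W U * (2 * c * real (card U))"
    if U: "U \<in> Pow S" for U
  proof -
    have "(\<Sum>\<pi>\<in>Prs. if U \<inter> e \<pi> = P \<pi> then W U else 0) = (\<Sum>\<pi>\<in>{\<pi>\<in>Prs. U \<inter> e \<pi> = P \<pi>}. W U)"
      by (rule sum.inter_filter[symmetric]) (rule finPrs)
    also have "\<dots> = W U * real (card {\<pi>\<in>Prs. U \<inter> e \<pi> = P \<pi>})" by simp
    also have "\<dots> \<le> W U * (2 * c * real (card U))"
    proof (rule mult_left_mono[OF _ W0])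
      have US: "U \<subseteq> S" using U by simp
      have "card {\<pi>\<in>Prs. U \<inter> e \<pi> = P \<pi>} \<le> 2 * card (delaunay_edges (restrict_hg (dual_edges d F) U))"
        unfolding Prs_def e_def P_def by (rule del_bound[OF finF US SF sub])
      then have "real (card {\<pi>\<in>Prs. U \<inter> e \<pi> = P \<pi>}) \<le> 2 * real (card (delaunay_edges (restrict_hg (dual_edges d F) U)))"
        by linarith
      moreover have "real (card (delaunay_edges (restrict_hg (dual_edges d F) U))) \<le> c * real (card U)"
        by (rule del_c[OF H _ c]) (use US SF in blast)
      ultimately show "real (card {\<pi>\<in>Prs. U \<inter> e \<pi> = P \<pi>}) \<le> 2 * c * real (card U)" by linarith
    qed
    finally show ?thesis .
  qed
  have cU: "(\<Sum>U\<in>Pow S. W U * real (card U)) = q * real (card S)"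
  proof -
    have "(\<Sum>U\<in>Pow S. W U * real (card U)) = (\<Sum>U\<in>Pow S. \<Sum>A\<in>S. if U \<inter> {A} = {A} then W U else 0)"
    proof (rule sum.cong[OF refl])
      fix U assume U: "U \<in> Pow S"
      have "(\<Sum>A\<in>S. if U \<inter> {A} = {A} then W U else 0) = (\<Sum>A\<in>{A\<in>S. U \<inter> {A} = {A}}. W U)"
        by (rule sum.inter_filter[symmetric]) (rule finS)
      also have "{A\<in>S. U \<inter> {A} = {A}} = U" using U by auto
      finally show "W U * real (card U) = (\<Sum>A\<in>S. if U \<inter> {A} = {A} then W U else 0)" by simp
    qed
    also have "\<dots> = (\<Sum>A\<in>S. \<Sum>U\<in>Pow S. if U \<inter> {A} = {A} then W U else 0)" by (rule sum.swap)
    also have "\<dots> = (\<Sum>A\<in>S. q)"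
    proof (rule sum.cong[OF refl])
      fix A assume A: "A \<in> S"
      have "(\<Sum>U\<in>Pow S. if U \<inter> {A} = {A} then W U else 0) = (\<Sum>U\<in>{U\<in>Pow S. U \<inter> {A} = {A}}. W U)"
        by (rule sum.inter_filter[symmetric]) (rule finP)
      also have "{U\<in>Pow S. U \<inter> {A} = {A}} = {U. U \<subseteq> S \<and> U \<inter> {A} = {A}}" by auto
      also have "(\<Sum>U\<in>{U. U \<subseteq> S \<and> U \<inter> {A} = {A}}. W U) = q ^ card {A} * r ^ card ({A} - {A}) * (q + r) ^ card (S - {A})"
        unfolding W_def by (rule weight_sum[OF finS]) (use A in auto)
      also have "\<dots> = q" using qr by simp
      finally show "(\<Sum>U\<in>Pow S. if U \<inter> {A} = {A} then W U else 0) = q" .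
    qed
    also have "\<dots> = q * real (card S)" by simp
    finally show ?thesis .
  qed
  have "real (card Prs) * (q ^ 2 / 2) = (\<Sum>\<pi>\<in>Prs. q ^ 2 / 2)" by simp
  also have "\<dots> \<le> (\<Sum>\<pi>\<in>Prs. \<Sum>U\<in>Pow S. if U \<inter> e \<pi> = P \<pi> then W U else 0)"
    by (rule sum_mono) (rule a)
  also have "\<dots> = (\<Sum>U\<in>Pow S. \<Sum>\<pi>\<in>Prs. if U \<inter> e \<pi> = P \<pi> then W U else 0)" by (rule sum.swap)
  also have "\<dots> \<le> (\<Sum>U\<in>Pow S. W U * (2 * c * real (card U)))" by (rule sum_mono) (rule inner)
  also have "\<dots> = 2 * c * (\<Sum>U\<in>Pow S. W U * real (card U))"
    by (simp add: sum_distrib_left algebra_simps)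
  also have "\<dots> = 2 * c * q * real (card S)" using cU by simp
  finally have ineq: "real (card Prs) * (q ^ 2 / 2) \<le> 2 * c * q * real (card S)" .
  then have "real (card Prs) * q \<le> 4 * c * real (card S)"
    using q0 by (simp add: power2_eq_square field_simps)
  then have "real (card Prs) * q * (2 * real k) \<le> 4 * c * real (card S) * (2 * real k)"
    using kpos by (intro mult_right_mono) simp_all
  moreover have "real (card Prs) * q * (2 * real k) = real (card Prs)" unfolding q_def using kpos by simp
  ultimately have "real (card Prs) \<le> 4 * c * real (card S) * (2 * real k)" by linarith
  also have "\<dots> = 8 * c * real k * real (card S)" by (simp add: algebra_simps)
  finally show ?thesis unfolding Prs_def .
qed



theorem mainTheorem5:
  fixes c :: real
  assumes "c > 0"
  shows "\<exists>\<delta>::real. \<delta> > 0 \<and>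
    (\<forall>(d::nat) (p::nat) (n::nat) (F :: (nat \<Rightarrow> real) set set).
       1 \<le> d \<and> 2 \<le> p \<and> 1 \<le> n \<and> finite F \<and> card F = n \<and>
       (\<forall>B\<in>F. B \<noteq> {} \<and> B \<subseteq> Rn d) \<and>
       hered_c_linear_delaunay c F (dual_edges d F) \<and>
       p2_property p F
       \<longrightarrow> (\<exists>x\<in>Rn d. real (card {B \<in> F. x \<in> B}) \<ge> \<delta> * real n / real p))"
proof (rule exI[of _ "1 / (8 * c + 1)"], intro conjI allI impI)
  show "1 / (8 * c + 1) > 0" using assms by simp
next
  fix d p n :: nat and F :: "(nat \<Rightarrow> real) set set"
  assume hyp: "1 \<le> d \<and> 2 \<le> p \<and> 1 \<le> n \<and> finite F \<and> card F = n \<and>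
       (\<forall>B\<in>F. B \<noteq> {} \<and> B \<subseteq> Rn d) \<and>
       hered_c_linear_delaunay c F (dual_edges d F) \<and> p2_property p F"
  then have p2: "2 \<le> p" and n1: "1 \<le> n" and finF: "finite F" and cF: "card F = n"
    and ne: "\<forall>B\<in>F. B \<noteq> {}" and sub: "\<forall>B\<in>F. B \<subseteq> Rn d"
    and H: "hered_c_linear_delaunay c F (dual_edges d F)" and P2: "p2_property p F"
    by auto
  define Dp where "Dp = (\<lambda>x. card {B \<in> F. x \<in> B}) ` Rn d"
  have Dpsub: "Dp \<subseteq> {..n}"
  proof
    fix m assume "m \<in> Dp"
    then obtain x where m: "m = card {B \<in> F. x \<in> B}" unfolding Dp_def by blast
    have "card {B \<in> F. x \<in> B} \<le> card F" by (rule card_mono[OF finF]) blast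
    then show "m \<in> {..n}" using m cF by simp
  qed
  have finDp: "finite Dp" using Dpsub by (rule finite_subset) simp
  have z: "(\<lambda>_. 0) \<in> Rn d" unfolding Rn_def by simp
  have Dpne: "Dp \<noteq> {}" unfolding Dp_def using z by blast
  define k where "k = Max Dp"
  have "k \<in> Dp" unfolding k_def using finDp Dpne by (rule Max_in)
  then obtain x0 where x0: "x0 \<in> Rn d" "card {B \<in> F. x0 \<in> B} = k" unfolding Dp_def by blast
  have dep: "\<forall>x\<in>Rn d. card {B\<in>F. x \<in> B} \<le> k"
  proof
    fix x assume "x \<in> Rn d"
    then have "card {B\<in>F. x \<in> B} \<in> Dp" unfolding Dp_def by blast
    then show "card {B\<in>F. x \<in> B} \<le> k" unfolding k_def using finDp by (rule Max_ge[rotated])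
  qed
  have k1: "k \<ge> 1"
  proof -
    have "F \<noteq> {}" using cF n1 by auto
    then obtain B where B: "B \<in> F" by blast
    then obtain b where b: "b \<in> B" using ne by blast
    have bR: "b \<in> Rn d" using b B sub by blast
    have "B \<in> {B \<in> F. b \<in> B}" using B b by simp
    moreover have "finite {B \<in> F. b \<in> B}" using finF by simp
    ultimately have "card {B \<in> F. b \<in> B} \<ge> 1"
      by (metis One_nat_def Suc_leI card_gt_0_iff empty_iff)
    then show ?thesis using dep bR by (meson order_trans)
  qed
  define D :: real where "D = 8 * c * real k"
  have "\<exists>I\<subseteq>F. (\<forall>a\<in>I. \<forall>b\<in>I. a \<noteq> b \<longrightarrow> \<not> (a \<inter> b \<noteq> {})) \<and> real (card F) \<le> (D + 1) * real (card I)"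
  proof (rule greedy[OF finF])
    fix a b :: "(nat \<Rightarrow> real) set" assume "a \<inter> b \<noteq> {}" then show "b \<inter> a \<noteq> {}" by blast
  next
    fix S assume SF: "S \<subseteq> F" and Sne: "S \<noteq> {}"
    show "\<exists>a\<in>S. real (card {b\<in>S. b \<noteq> a \<and> a \<inter> b \<noteq> {}}) \<le> D"
    proof (rule ccontr)
      assume "\<not> ?thesis"
      then have gt: "\<And>a. a \<in> S \<Longrightarrow> D < real (card {b\<in>S. b \<noteq> a \<and> a \<inter> b \<noteq> {}})" by (simp add: not_le)
      have finS: "finite S" using SF finF by (rule finite_subset)
      have "(\<Sum>a\<in>S. D) < (\<Sum>a\<in>S. real (card {b\<in>S. b \<noteq> a \<and> a \<inter> b \<noteq> {}}))"
        by (rule sum_strict_mono[OF finS Sne gt])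
      also have "\<dots> = real (card (SIGMA A:S. {B\<in>S. B \<noteq> A \<and> A \<inter> B \<noteq> {}}))"
        using finS by (simp add: card_SigmaI)
      also have "\<dots> \<le> 8 * c * real k * real (card S)"
        by (rule pair_bound[OF assms finF sub H k1 dep SF])
      finally show False unfolding D_def by (simp add: algebra_simps)
    qed
  qed
  then obtain I where I: "I \<subseteq> F" "\<forall>a\<in>I. \<forall>b\<in>I. a \<noteq> b \<longrightarrow> a \<inter> b = {}"
    "real n \<le> (D + 1) * real (card I)" using cF by auto
  have cI: "card I < p"
  proof (rule ccontr)
    assume "\<not> card I < p"
    then obtain G where G: "G \<subseteq> I" "card G = p" by (meson not_less obtain_subset_with_card_n)
    then have "G \<subseteq> F" using I(1) by simp
    then obtain A B where "A \<in> G" "B \<in> G" "A \<noteq> B" "A \<inter> B \<noteq> {}"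
      using P2 G(2) unfolding p2_property_def by blast
    then show False using I(2) G(1) by blast
  qed
  have "real n \<le> (D + 1) * real p"
  proof -
    have "(D + 1) * real (card I) \<le> (D + 1) * real p"
      using cI assms unfolding D_def by (intro mult_left_mono) simp_all
    then show ?thesis using I(3) by linarith
  qed
  also have "\<dots> \<le> (8 * c + 1) * real k * real p"
  proof -
    have "D + 1 \<le> (8 * c + 1) * real k" unfolding D_def using k1 by (simp add: algebra_simps)
    then show ?thesis by (intro mult_right_mono) simp_all
  qed
  finally have nb: "real n \<le> (8 * c + 1) * real k * real p" .
  have pp: "real p > 0" using p2 by simp
  have cp: "8 * c + 1 > 0" using assms by simp
  have X: "(8 * c + 1) * real p > 0" using pp cp by simp
  have "real n / ((8 * c + 1) * real p) \<le> real k"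
    using nb X by (simp add: divide_le_eq mult.assoc mult.left_commute)
  moreover have "1 / (8 * c + 1) * real n / real p = real n / ((8 * c + 1) * real p)" by simp
  ultimately have "1 / (8 * c + 1) * real n / real p \<le> real k" by simp
  then show "\<exists>x\<in>Rn d. real (card {B \<in> F. x \<in> B}) \<ge> 1 / (8 * c + 1) * real n / real p"
    using x0 by auto
qed


end
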